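(* Let $A$ be a linear Nakayama algebra with vertices labelled canonically $1\to 2\to\cdots\to n$. Then Ringel's homological permutation $\hat{h}$ of $A$ coincides with the Coxeter permutation $p_A$ of $A$ (computed with respect to this labelling).
   Context: $A=KQ/I$ with $K$ a field, $Q$ the quiver $1\to2\to\cdots\to n$ and $I$ an admissible ideal (a linear Nakayama algebra); modules are finitely generated right modules, $S_i$, $P(i)=e_iA$, $I(i)=D(Ae_i)$ are the simple, indecomposable projective and indecomposable injective modules at vertex $i$, and $I(S)$ denotes the injective envelope of $S$. $\Omega$ denotes the syzygy (kernel of a projective cover). For a simple module $S$ let $e(S)=\min\{\operatorname{pdim}S,\operatorname{pdim}I(S)\}$ (finite for Nakayama algebras), let $N(S)=S$ if $e(S)$ is odd and $N(S)=I(S)$ if $e(S)$ is even, and set $h(S)=\operatorname{top}\Omega^{e(S)}(N(S))$; this is a simple module and $h$ is a bijection on isoclasses of simple modules. Ringel's homological permutation is $\hat h:\{1,\ldots,n\}\to\{1,\ldots,n\}$, $\hat h(i)=j$ if $h(S_i)\cong S_j$. The Cartan matrix is $\omega_A=(\dim_K e_jAe_i)_{i,j}$, the Coxeter matrix is $C_A=-\omega_A^T\omega_A^{-1}$. A Bruhat decomposition of an invertible matrix $M$ is $M=U_1PU_2$ with $U_1,U_2$ upper triangular and $P$ a permutation matrix (uniquely determined by $M$). The Coxeter permutation $p_A$ is defined by $p_A(i)=j$ if the unique non-zero entry in column $i$ of the permutation matrix $P$ of a Bruhat decomposition of $C_A$ lies in row $j$. *)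

theory Defs
  imports "Jordan_Normal_Form.Gauss_Jordan_Elimination" "HOL-Library.Extended_Nat"
begin

text \<open>
  Combinatorial model of a linear Nakayama algebra A = KQ/I, Q = 0 -> 1 -> ... -> n-1
  (vertices shifted to 0-based indices), given by its Kupisch series
  c i = dim_K (e_i A) = length of the indecomposable projective P(i).
  P(i) has composition factors S_i, S_(i+1), ..., S_(i + c i - 1) (top S_i).
  Every admissible ideal I gives such a series and every such series arises.
\<close>

definition kupisch :: "nat \<Rightarrow> (nat \<Rightarrow> nat) \<Rightarrow> bool" where
  "kupisch n c \<longleftrightarrow> n \<ge> 1 \<and> c (n - 1) = 1 \<and>
     (\<forall>i < n - 1. c i \<ge> 2 \<and> c (Suc i) \<ge> c i - 1)"

text \<open>Indecomposable modules: Some (i, l) is the uniserial module with top S_i and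
  length l (composition factors S_i, ..., S_(i+l-1)), where 1 <= l <= c i;
  None is the zero module.\<close>

type_synonym nmod = "(nat \<times> nat) option"

definition simple_mod :: "nat \<Rightarrow> nmod" where
  "simple_mod i = Some (i, 1)"

text \<open>Projective cover of Some (i,l) is P(i) = Some (i, c i); the syzygy is the kernel.\<close>
fun syz :: "(nat \<Rightarrow> nat) \<Rightarrow> nmod \<Rightarrow> nmod" where
  "syz c None = None"
| "syz c (Some (i, l)) = (if l \<ge> c i then None else Some (i + l, c i - l))"

fun is_proj :: "(nat \<Rightarrow> nat) \<Rightarrow> nmod \<Rightarrow> bool" where
  "is_proj c None = True"
| "is_proj c (Some (i, l)) = (l = c i)"

definition pdim :: "(nat \<Rightarrow> nat) \<Rightarrow> nmod \<Rightarrow> enat" where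
  "pdim c M = (if \<exists>k. is_proj c ((syz c ^^ k) M)
               then enat (LEAST k. is_proj c ((syz c ^^ k) M)) else \<infinity>)"

text \<open>Injective envelope of S_j: I(j) = D(A e_j), the longest uniserial module
  with socle S_j, i.e. Some (i, j - i + 1) with i minimal such that j - i + 1 <= c i.\<close>
definition inj_env :: "(nat \<Rightarrow> nat) \<Rightarrow> nat \<Rightarrow> nmod" where
  "inj_env c j = (let i = (LEAST i. i \<le> j \<and> j - i + 1 \<le> c i) in Some (i, j - i + 1))"

fun top_mod :: "nmod \<Rightarrow> nat" where
  "top_mod (Some (i, l)) = i"
| "top_mod None = undefined"

definition e_val :: "(nat \<Rightarrow> nat) \<Rightarrow> nat \<Rightarrow> enat" where
  "e_val c j = min (pdim c (simple_mod j)) (pdim c (inj_env c j))"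

definition N_mod :: "(nat \<Rightarrow> nat) \<Rightarrow> nat \<Rightarrow> nmod" where
  "N_mod c j = (if odd (the_enat (e_val c j)) then simple_mod j else inj_env c j)"

definition ringel_hperm :: "(nat \<Rightarrow> nat) \<Rightarrow> nat \<Rightarrow> nat" where
  "ringel_hperm c j = top_mod ((syz c ^^ the_enat (e_val c j)) (N_mod c j))"

text \<open>Cartan matrix: entry (i,j) is dim_K e_j A e_i = multiplicity of S_i in P(j).\<close>
definition cartan :: "nat \<Rightarrow> (nat \<Rightarrow> nat) \<Rightarrow> rat mat" where
  "cartan n c = mat n n (\<lambda>(i, j). if j \<le> i \<and> i < j + c j then 1 else 0)"

definition coxeter :: "nat \<Rightarrow> (nat \<Rightarrow> nat) \<Rightarrow> rat mat" where
  "coxeter n c = - (transpose_mat (cartan n c) * the (mat_inverse (cartan n c)))"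

definition is_perm_mat :: "nat \<Rightarrow> rat mat \<Rightarrow> bool" where
  "is_perm_mat n P \<longleftrightarrow> P \<in> carrier_mat n n \<and>
     (\<forall>i<n. \<forall>j<n. P $$ (i, j) = 0 \<or> P $$ (i, j) = 1) \<and>
     (\<forall>j<n. \<exists>!i. i < n \<and> P $$ (i, j) = 1) \<and>
     (\<forall>i<n. \<exists>!j. j < n \<and> P $$ (i, j) = 1)"

definition perm_mat :: "nat \<Rightarrow> (nat \<Rightarrow> nat) \<Rightarrow> rat mat" where
  "perm_mat n p = mat n n (\<lambda>(i, j). if i = p j then 1 else 0)"

definition bruhat :: "nat \<Rightarrow> rat mat \<Rightarrow> rat mat \<Rightarrow> rat mat \<Rightarrow> rat mat \<Rightarrow> bool" where
  "bruhat n M U1 P U2 \<longleftrightarrow> U1 \<in> carrier_mat n n \<and> U2 \<in> carrier_mat n n \<and>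
     upper_triangular U1 \<and> upper_triangular U2 \<and> is_perm_mat n P \<and> M = U1 * P * U2"

definition is_coxeter_perm :: "nat \<Rightarrow> rat mat \<Rightarrow> (nat \<Rightarrow> nat) \<Rightarrow> bool" where
  "is_coxeter_perm n M p \<longleftrightarrow>
     (\<exists>U1 P U2. bruhat n M U1 P U2) \<and>
     (\<forall>U1 P U2. bruhat n M U1 P U2 \<longrightarrow> (\<forall>i<n. \<forall>j<n. P $$ (j, i) \<noteq> 0 \<longleftrightarrow> j = p i))"

end

theory Submission
  imports Defs "Jordan_Normal_Form.Determinant"
begin


lemma upper_mult:
  assumes A: "A \<in> carrier_mat n n" and B: "B \<in> carrier_mat n n"
    and uA: "upper_triangular A" and uB: "upper_triangular B"
  shows "upper_triangular (A * B)" "\<And>i. i < n \<Longrightarrow> (A * B) $$ (i, i) = A $$ (i, i) * B $$ (i, i)"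
proof -
  have e: "(A * B) $$ (i, j) = (\<Sum>k<n. A $$ (i, k) * B $$ (k, j))" if "i < n" "j < n" for i j
    using A B that by (simp add: scalar_prod_def lessThan_atLeast0)
  show "upper_triangular (A * B)"
  proof (rule upper_triangularI)
    fix i j assume ji: "j < i" and i: "i < dim_row (A * B)"
    then have i': "i < n" using A by simp
    have "A $$ (i, k) * B $$ (k, j) = 0" if "k < n" for k
    proof (cases "k < i")
      case True then show ?thesis using uA A i' by (simp add: upper_triangularD)
    next
      case False then have "j < k" using ji by simp
      then show ?thesis using uB B that by (simp add: upper_triangularD)
    qed
    then show "(A * B) $$ (i, j) = 0" using e[OF i'] ji i' by simp
  qed
  fix i assume i: "i < n"
  have "A $$ (i, k) * B $$ (k, i) = (if k = i then A $$ (i, i) * B $$ (i, i) else 0)" if "k < n" for k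
  proof (cases "k < i")
    case True then show ?thesis using uA A i by (simp add: upper_triangularD)
  next
    case False
    show ?thesis
    proof (cases "k = i")
      case False
      with \<open>\<not> k < i\<close> have "i < k" by simp
      then show ?thesis using uB B that False by (simp add: upper_triangularD)
    qed simp
  qed
  then have "(\<Sum>k<n. A $$ (i, k) * B $$ (k, i)) = (\<Sum>k<n. if k = i then A $$ (i, i) * B $$ (i, i) else 0)"
    by (intro sum.cong) auto
  also have "\<dots> = A $$ (i, i) * B $$ (i, i)" using i by simp
  finally show "(A * B) $$ (i, i) = A $$ (i, i) * B $$ (i, i)" using e[OF i i] by simp
qed

lemma upper_inv:
  fixes A B :: "'a :: field mat"
  assumes A: "A \<in> carrier_mat n n" and B: "B \<in> carrier_mat n n"
    and uA: "upper_triangular A" and dA: "\<And>i. i < n \<Longrightarrow> A $$ (i, i) \<noteq> 0"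
    and AB: "A * B = 1\<^sub>m n"
  shows "upper_triangular B"
proof -
  have e: "(A * B) $$ (i, j) = (\<Sum>k<n. A $$ (i, k) * B $$ (k, j))" if "i < n" "j < n" for i j
    using A B that by (simp add: scalar_prod_def lessThan_atLeast0)
  have main: "\<forall>i. j < i \<longrightarrow> i < n \<longrightarrow> B $$ (i, j) = 0" if j: "j < n" for j
  proof -
    have "\<forall>i. n - i = t \<longrightarrow> j < i \<longrightarrow> i < n \<longrightarrow> B $$ (i, j) = 0" for t
    proof (induction t rule: less_induct)
      case (less t)
      show ?case
      proof (intro allI impI)
        fix i assume t: "n - i = t" and ji: "j < i" and i: "i < n"
        have z: "A $$ (i, k) * B $$ (k, j) = (if k = i then A $$ (i, i) * B $$ (i, j) else 0)" if "k < n" for k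
        proof (cases "k < i")
          case True then show ?thesis using uA A i by (simp add: upper_triangularD)
        next
          case False
          show ?thesis
          proof (cases "k = i")
            case False
            with \<open>\<not> k < i\<close> have "i < k" by simp
            then have "B $$ (k, j) = 0" using less.IH[of "n - k"] ji that t i by auto
            then show ?thesis using False by simp
          qed simp
        qed
        have "0 = (A * B) $$ (i, j)" using AB i j ji by simp
        also have "\<dots> = (\<Sum>k<n. if k = i then A $$ (i, i) * B $$ (i, j) else 0)"
          unfolding e[OF i j] by (intro sum.cong) (auto simp: z)
        also have "\<dots> = A $$ (i, i) * B $$ (i, j)" using i by simp
        finally show "B $$ (i, j) = 0" using dA[OF i] by simp
      qed
    qed
    then show ?thesis by blast
  qed
  show ?thesis
  proof (rule upper_triangularI)
    fix i j assume "j < i" "i < dim_row B"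
    then show "B $$ (i, j) = 0" using main[of j] B by auto
  qed
qed

lemma upper_det_diag:
  fixes A :: "'a :: field mat"
  assumes A: "A \<in> carrier_mat n n" and uA: "upper_triangular A"
  shows "det A \<noteq> 0 \<longleftrightarrow> (\<forall>i<n. A $$ (i, i) \<noteq> 0)"
proof -
  have "det A = prod_list (diag_mat A)" using det_upper_triangular[OF uA A] .
  moreover have "diag_mat A = map (\<lambda>i. A $$ (i, i)) [0..<n]" using A unfolding diag_mat_def by simp
  ultimately show ?thesis by (auto simp: prod_list_zero_iff)
qed

lemma inverse_ex:
  fixes A :: "'a :: field mat"
  assumes A: "A \<in> carrier_mat n n" and d: "det A \<noteq> 0"
  obtains B where "B \<in> carrier_mat n n" "A * B = 1\<^sub>m n" "B * A = 1\<^sub>m n"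
proof -
  have "A \<in> Units (ring_mat TYPE('a) n undefined)" using det_non_zero_imp_unit[OF A d] .
  then obtain B where "B \<in> carrier_mat n n" "A * B = 1\<^sub>m n" "B * A = 1\<^sub>m n"
    unfolding Units_def ring_mat_def by auto
  then show ?thesis using that by blast
qed

lemma inj_le_id:
  fixes s :: "nat \<Rightarrow> nat"
  assumes inj: "inj_on s {..<n}" and le: "\<And>r. r < n \<Longrightarrow> s r \<le> r"
  shows "r < n \<Longrightarrow> s r = r"
proof (induction r rule: less_induct)
  case (less r)
  show ?case
  proof (rule ccontr)
    assume ne: "s r \<noteq> r"
    then have lt: "s r < r" using le[OF less.prems] by simp
    then have "s (s r) = s r" using less.IH[of "s r"] less.prems by simp
    moreover have "s r < n" using lt less.prems by simp
    ultimately have "s r = r" using inj less.prems unfolding inj_on_def by blast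
    then show False using ne by simp
  qed
qed


lemma perm_mat_carrier: "perm_mat n h \<in> carrier_mat n n" unfolding perm_mat_def by simp

lemma perm_mat_entry: "i < n \<Longrightarrow> j < n \<Longrightarrow> perm_mat n h $$ (i, j) = (if i = h j then 1 else 0)"
  unfolding perm_mat_def by simp

lemma mult_entry:
  assumes "A \<in> carrier_mat n n" "B \<in> carrier_mat n n" "i < n" "j < n"
  shows "(A * B) $$ (i, j) = (\<Sum>k<n. A $$ (i, k) * B $$ (k, j))"
  using assms by (simp add: scalar_prod_def lessThan_atLeast0)

lemma mult_perm_entry:
  assumes A: "A \<in> carrier_mat n n" and i: "i < n" and r: "r < n" and hr: "h r < n"
  shows "(A * perm_mat n h) $$ (i, r) = A $$ (i, h r)"
proof -
  have "(A * perm_mat n h) $$ (i, r) = (\<Sum>k<n. A $$ (i, k) * perm_mat n h $$ (k, r))"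
    using mult_entry[OF A perm_mat_carrier i r] .
  also have "\<dots> = (\<Sum>k<n. if k = h r then A $$ (i, k) else 0)"
    by (intro sum.cong) (auto simp: perm_mat_entry r)
  also have "\<dots> = A $$ (i, h r)" using hr by simp
  finally show ?thesis .
qed

lemma bruhat_unique:
  fixes h :: "nat \<Rightarrow> nat" and U1 U2 V1 V2 Q :: "rat mat"
  assumes c: "U1 \<in> carrier_mat n n" "U2 \<in> carrier_mat n n" "V1 \<in> carrier_mat n n" "V2 \<in> carrier_mat n n"
    and u: "upper_triangular U1" "upper_triangular U2" "upper_triangular V1" "upper_triangular V2"
    and hb: "bij_betw h {..<n} {..<n}"
    and Q: "is_perm_mat n Q"
    and eq: "U1 * perm_mat n h * U2 = V1 * Q * V2"
    and d: "det (U1 * perm_mat n h * U2) \<noteq> 0"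
  shows "\<forall>i<n. \<forall>j<n. Q $$ (j, i) \<noteq> 0 \<longleftrightarrow> j = h i"
proof -
  let ?P = "perm_mat n h"
  have Pc: "?P \<in> carrier_mat n n" by (rule perm_mat_carrier)
  have Qc: "Q \<in> carrier_mat n n" using Q unfolding is_perm_mat_def by simp
  have Q01: "\<And>i j. i < n \<Longrightarrow> j < n \<Longrightarrow> Q $$ (i, j) = 0 \<or> Q $$ (i, j) = 1"
    using Q unfolding is_perm_mat_def by simp
  have Qcol: "\<And>j. j < n \<Longrightarrow> \<exists>!i. i < n \<and> Q $$ (i, j) = 1"
    using Q unfolding is_perm_mat_def by simp
  have hlt: "\<And>r. r < n \<Longrightarrow> h r < n" using hb unfolding bij_betw_def by auto
  have hinj: "inj_on h {..<n}" using hb unfolding bij_betw_def by simp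
  have dU: "det (U1 * ?P * U2) = det U1 * det ?P * det U2"
    using det_mult[of "U1 * ?P" n U2] det_mult[of U1 n ?P] c Pc by simp
  have dV: "det (V1 * Q * V2) = det V1 * det Q * det V2"
    using det_mult[of "V1 * Q" n V2] det_mult[of V1 n Q] c Qc by simp
  have dets: "det U1 \<noteq> 0" "det U2 \<noteq> 0" "det V1 \<noteq> 0" "det V2 \<noteq> 0"
    using d dU dV eq by auto
  have diagU1: "\<And>i. i < n \<Longrightarrow> U1 $$ (i, i) \<noteq> 0" using upper_det_diag[OF c(1) u(1)] dets by simp
  have diagU2: "\<And>i. i < n \<Longrightarrow> U2 $$ (i, i) \<noteq> 0" using upper_det_diag[OF c(2) u(2)] dets by simp
  have diagV1: "\<And>i. i < n \<Longrightarrow> V1 $$ (i, i) \<noteq> 0" using upper_det_diag[OF c(3) u(3)] dets by simp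
  have diagV2: "\<And>i. i < n \<Longrightarrow> V2 $$ (i, i) \<noteq> 0" using upper_det_diag[OF c(4) u(4)] dets by simp
  obtain W1 where W1: "W1 \<in> carrier_mat n n" "V1 * W1 = 1\<^sub>m n" "W1 * V1 = 1\<^sub>m n"
    using inverse_ex[OF c(3) dets(3)] by blast
  obtain W2 where W2: "W2 \<in> carrier_mat n n" "U2 * W2 = 1\<^sub>m n" "W2 * U2 = 1\<^sub>m n"
    using inverse_ex[OF c(2) dets(2)] by blast
  have uW1: "upper_triangular W1" using upper_inv[OF c(3) W1(1) u(3) diagV1 W1(2)] .
  have uW2: "upper_triangular W2" using upper_inv[OF c(2) W2(1) u(2) diagU2 W2(2)] .
  have diagW1: "W1 $$ (i, i) \<noteq> 0" if "i < n" for i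
  proof
    assume "W1 $$ (i, i) = 0"
    then have "(W1 * V1) $$ (i, i) = 0" using upper_mult(2)[OF W1(1) c(3) uW1 u(3) that] by simp
    then show False using W1(3) that by simp
  qed
  define X where "X = W1 * U1"
  define B where "B = V2 * W2"
  have Xc: "X \<in> carrier_mat n n" and Bc: "B \<in> carrier_mat n n" using W1 W2 c unfolding X_def B_def by auto
  have uB: "upper_triangular B" unfolding B_def using upper_mult(1)[OF c(4) W2(1) u(4) uW2] .
  have diagX: "X $$ (i, i) \<noteq> 0" if "i < n" for i
    unfolding X_def using upper_mult(2)[OF W1(1) c(1) uW1 u(1) that] diagW1[OF that] diagU1[OF that] by simp
  have XP: "X * ?P = Q * B"
  proof -
    have "X * ?P = W1 * U1 * ?P * (U2 * W2)" using W2(2) Xc Pc unfolding X_def by simp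
    also have "\<dots> = W1 * (U1 * ?P * U2) * W2"
      using W1(1) W2(1) c Pc by (simp add: assoc_mult_mat[of _ n n _ n _ n])
    also have "\<dots> = W1 * (V1 * Q * V2) * W2" using eq by simp
    also have "\<dots> = (W1 * V1) * Q * (V2 * W2)"
      using W1(1) W2(1) c Qc by (simp add: assoc_mult_mat[of _ n n _ n _ n])
    also have "\<dots> = Q * B" using W1(3) Qc Bc unfolding B_def by simp
    finally show ?thesis .
  qed
  have ex: "\<exists>b. b \<le> r \<and> Q $$ (h r, b) \<noteq> 0" if r: "r < n" for r
  proof -
    have "(X * ?P) $$ (h r, r) = X $$ (h r, h r)" using mult_perm_entry[of X n "h r" r h, OF Xc hlt[OF r] r hlt[OF r]] .
    then have "(Q * B) $$ (h r, r) \<noteq> 0" using XP diagX[OF hlt[OF r]] by simp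
    then have "(\<Sum>k<n. Q $$ (h r, k) * B $$ (k, r)) \<noteq> 0" using mult_entry[OF Qc Bc hlt[OF r] r] by simp
    then obtain k where k: "k < n" "Q $$ (h r, k) * B $$ (k, r) \<noteq> 0" by (meson lessThan_iff sum.neutral)
    then have "k \<le> r" using uB Bc by (metis le_less_linear mult_zero_right upper_triangularD carrier_matD(1))
    then show ?thesis using k by auto
  qed
  obtain s where s: "\<And>r. r < n \<Longrightarrow> s r \<le> r \<and> Q $$ (h r, s r) \<noteq> 0"
    using ex by metis
  have Qone: "Q $$ (i, j) \<noteq> 0 \<Longrightarrow> i < n \<Longrightarrow> j < n \<Longrightarrow> Q $$ (i, j) = 1" for i j using Q01 by blast
  have sinj: "inj_on s {..<n}"
  proof (rule inj_onI)
    fix r r' assume rr: "r \<in> {..<n}" "r' \<in> {..<n}" "s r = s r'"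
    have "s r < n" using s rr by (meson le_less_trans lessThan_iff)
    have r1: "r < n" "r' < n" using rr by auto
    have "Q $$ (h r, s r) \<noteq> 0" using s[OF r1(1)] by simp
    then have q1: "Q $$ (h r, s r) = 1" using Qone hlt[OF r1(1)] \<open>s r < n\<close> by simp
    have "Q $$ (h r', s r') \<noteq> 0" using s[OF r1(2)] by simp
    then have q2: "Q $$ (h r', s r) = 1" using Qone hlt[OF r1(2)] \<open>s r < n\<close> rr(3) by simp
    from q1 q2 have "Q $$ (h r, s r) = 1" "Q $$ (h r', s r) = 1" by auto
    then have "h r = h r'" using Qcol[OF \<open>s r < n\<close>] hlt rr by auto
    then show "r = r'" using hinj rr unfolding inj_on_def by blast
  qed
  have sid: "s r = r" if "r < n" for r using inj_le_id[OF sinj] s that by blast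
  have Qh: "Q $$ (h r, r) = 1" if "r < n" for r using s[OF that] sid[OF that] Qone hlt that by auto
  show ?thesis
  proof (intro allI impI)
    fix i j assume i: "i < n" and j: "j < n"
    show "Q $$ (j, i) \<noteq> 0 \<longleftrightarrow> j = h i"
    proof
      assume "Q $$ (j, i) \<noteq> 0"
      then have "Q $$ (j, i) = 1" using Qone i j by simp
      then show "j = h i" using Qcol[OF i] Qh[OF i] hlt[OF i] j by auto
    next
      assume "j = h i" then show "Q $$ (j, i) \<noteq> 0" using Qh[OF i] by simp
    qed
  qed
qed




locale nak =
  fixes n :: nat and c :: "nat \<Rightarrow> nat"
  assumes kup: "kupisch n c"
begin

definition FF :: "nat \<Rightarrow> nat" where "FF a = (if a < n then a + c a else a)"

lemma n_pos: "1 \<le> n" using kup unfolding kupisch_def by auto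

lemma c_last: "c (n - 1) = 1" using kup unfolding kupisch_def by auto

lemma c_ge2: "Suc a < n \<Longrightarrow> 2 \<le> c a" using kup unfolding kupisch_def by auto

lemma c_step: "Suc a < n \<Longrightarrow> c a - 1 \<le> c (Suc a)" using kup unfolding kupisch_def by auto

lemma c_pos: "a < n \<Longrightarrow> 1 \<le> c a"
proof (cases "Suc a < n")
  case True then show ?thesis using c_ge2[of a] by simp
next
  case False
  assume "a < n"
  with False have "a = n - 1" by simp
  then show ?thesis using c_last by simp
qed

lemma FF_lt: "a < n \<Longrightarrow> FF a = a + c a" unfolding FF_def by simp
lemma FF_ge_n: "n \<le> a \<Longrightarrow> FF a = a" unfolding FF_def by simp

lemma FF_gt: "a < n \<Longrightarrow> a < FF a" using c_pos[of a] by (simp add: FF_lt)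

lemma FF_ge: "a \<le> FF a" unfolding FF_def by simp

lemma FF_step: "FF a \<le> FF (Suc a)"
proof (cases "Suc a < n")
  case True
  then have "FF a = a + c a" "FF (Suc a) = Suc a + c (Suc a)" by (simp_all add: FF_lt)
  moreover have "c a - 1 \<le> c (Suc a)" "2 \<le> c a" using True c_step c_ge2 by auto
  ultimately show ?thesis by simp
next
  case False
  show ?thesis
  proof (cases "a < n")
    case True
    with False have "a = n - 1" by simp
    then have "FF a = n" using c_last True by (simp add: FF_lt)
    moreover have "FF (Suc a) = Suc a" using False by (simp add: FF_ge_n)
    ultimately show ?thesis using \<open>a = n - 1\<close> True by simp
  next
    case False
    then show ?thesis by (simp add: FF_ge_n)
  qed
qed

lemma FF_mono: "a \<le> b \<Longrightarrow> FF a \<le> FF b"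
proof (induction b)
  case 0 then show ?case by simp
next
  case (Suc b)
  show ?case
  proof (cases "a = Suc b")
    case True then show ?thesis by simp
  next
    case False
    with Suc.prems have "a \<le> b" by simp
    with Suc.IH have "FF a \<le> FF b" by simp
    also have "\<dots> \<le> FF (Suc b)" by (rule FF_step)
    finally show ?thesis .
  qed
qed

lemma FF_le_n: "a \<le> n \<Longrightarrow> FF a \<le> n"
  using FF_mono[of a n] by (simp add: FF_ge_n)

lemma FFp_mono: "a \<le> b \<Longrightarrow> (FF ^^ m) a \<le> (FF ^^ m) b"
  by (induction m) (auto intro: FF_mono)

lemma FFp_le_n: "a \<le> n \<Longrightarrow> (FF ^^ m) a \<le> n"
  by (induction m) (auto intro: FF_le_n)

lemma FFp_incr: "m \<le> m' \<Longrightarrow> (FF ^^ m) a \<le> (FF ^^ m') a"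
proof (induction m' )
  case 0 then show ?case by simp
next
  case (Suc m')
  show ?case
  proof (cases "m = Suc m'")
    case True then show ?thesis by simp
  next
    case False
    with Suc have "(FF ^^ m) a \<le> (FF ^^ m') a" by simp
    also have "\<dots> \<le> (FF ^^ Suc m') a" using FF_ge by simp
    finally show ?thesis .
  qed
qed

lemma FFp_reach: "min (a + m) n \<le> (FF ^^ m) a"
proof (induction m)
  case 0 then show ?case by simp
next
  case (Suc m)
  let ?v = "(FF ^^ m) a"
  show ?case
  proof (cases "?v < n")
    case True
    then have "Suc ?v \<le> FF ?v" using FF_gt by (simp add: Suc_le_eq)
    then show ?thesis using Suc.IH by simp
  next
    case False
    then have "FF ?v = ?v" by (simp add: FF_ge_n)
    then show ?thesis using False by simp
  qed
qed

definition GG :: "nat \<Rightarrow> nat" where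
  "GG r = (LEAST i. i \<le> r \<and> r - i + 1 \<le> c i)"

lemma GG_props:
  assumes "r < n"
  shows "GG r \<le> r" "r < FF (GG r)" "\<And>i. i < GG r \<Longrightarrow> FF i \<le> r"
proof -
  have ex: "r \<le> r \<and> r - r + 1 \<le> c r" using c_pos[OF assms] by simp
  have L: "GG r \<le> r \<and> r - GG r + 1 \<le> c (GG r)"
    unfolding GG_def by (rule LeastI[of _ r], rule ex)
  then show "GG r \<le> r" by simp
  from L assms have "GG r < n" by simp
  with L show "r < FF (GG r)" by (simp add: FF_lt, linarith)
  fix i assume i: "i < GG r"
  have "\<not> (i \<le> r \<and> r - i + 1 \<le> c i)"
    using not_less_Least[OF i[unfolded GG_def]] unfolding GG_def by simp
  moreover have "i \<le> r" using i L by simp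
  ultimately have "i + c i \<le> r" by simp
  moreover have "i < n" using \<open>i \<le> r\<close> assms by simp
  ultimately show "FF i \<le> r" by (simp add: FF_lt)
qed

fun sq :: "nat \<Rightarrow> nat \<Rightarrow> nat \<Rightarrow> nat" where
  "sq x y 0 = x"
| "sq x y (Suc 0) = y"
| "sq x y (Suc (Suc k)) = FF (sq x y k)"

lemma sq_even: "sq x y (2 * m) = (FF ^^ m) x"
  by (induction m) (auto simp: mult_2)

lemma sq_odd: "sq x y (Suc (2 * m)) = (FF ^^ m) y"
  by (induction m) (auto simp: mult_2)

lemma chain:
  assumes xy: "x < y" "y \<le> FF x" "x < n"
  shows "(\<forall>k'<k. sq x y (Suc k') \<noteq> FF (sq x y k')) \<Longrightarrow>
    (syz c ^^ k) (Some (x, y - x)) = Some (sq x y k, sq x y (Suc k) - sq x y k) \<and>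
    sq x y k < sq x y (Suc k) \<and> sq x y (Suc k) \<le> FF (sq x y k) \<and> sq x y k < n"
proof (induction k)
  case 0 then show ?case using xy by simp
next
  case (Suc k)
  let ?s = "sq x y"
  from Suc.prems have np: "?s (Suc k) \<noteq> FF (?s k)" by simp
  from Suc.prems have "\<forall>k'<k. ?s (Suc k') \<noteq> FF (?s k')" by simp
  with Suc.IH have IH: "(syz c ^^ k) (Some (x, y - x)) = Some (?s k, ?s (Suc k) - ?s k)"
    "?s k < ?s (Suc k)" "?s (Suc k) \<le> FF (?s k)" "?s k < n" by auto
  from IH np have lt: "?s (Suc k) < FF (?s k)" by simp
  have FFk: "FF (?s k) = ?s k + c (?s k)" using IH(4) by (simp add: FF_lt)
  have "FF (?s k) \<le> n" using IH(4) FF_le_n by simp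
  with lt have n1: "?s (Suc k) < n" by simp
  have s2: "?s (Suc (Suc k)) = FF (?s k)" by simp
  have m: "FF (?s k) \<le> FF (?s (Suc k))" using IH(2) FF_mono by simp
  have "(syz c ^^ Suc k) (Some (x, y - x)) = syz c (Some (?s k, ?s (Suc k) - ?s k))"
    using IH(1) by simp
  also have "\<dots> = Some (?s (Suc k), ?s (Suc (Suc k)) - ?s (Suc k))"
    using lt FFk IH(2) s2 by auto
  finally show ?case using lt s2 m n1 by simp
qed

lemma chain_proj:
  assumes "a < b" "a < n"
  shows "is_proj c (Some (a, b - a)) \<longleftrightarrow> b = FF a"
  using assms by (auto simp: FF_lt)

lemma chain_term:
  assumes xy: "x < y" "y \<le> FF x" "x < n"
  shows "\<exists>k. sq x y (Suc k) = FF (sq x y k)"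
proof (rule ccontr)
  assume "\<not> ?thesis"
  then have all: "\<And>k. sq x y k < sq x y (Suc k) \<and> sq x y k < n"
    using chain[OF xy] by blast
  have "k \<le> sq x y k" for k
  proof (induction k)
    case (Suc k) then show ?case using all[of k] by simp
  qed simp
  then show False using all[of n] by (metis leD)
qed

lemma chain_pdim:
  assumes xy: "x < y" "y \<le> FF x" "x < n"
  defines "p \<equiv> LEAST k. sq x y (Suc k) = FF (sq x y k)"
  shows "pdim c (Some (x, y - x)) = enat p"
proof -
  let ?s = "sq x y"
  let ?M = "Some (x, y - x)"
  obtain k0 where k0: "?s (Suc k0) = FF (?s k0)" using chain_term[OF xy] by blast
  have pP: "?s (Suc p) = FF (?s p)" unfolding p_def by (rule LeastI[of _ k0], rule k0)
  have below: "\<And>k. k < p \<Longrightarrow> ?s (Suc k) \<noteq> FF (?s k)"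
    unfolding p_def by (rule not_less_Least)
  have st: "k \<le> p \<Longrightarrow> (syz c ^^ k) ?M = Some (?s k, ?s (Suc k) - ?s k) \<and>
    ?s k < ?s (Suc k) \<and> ?s (Suc k) \<le> FF (?s k) \<and> ?s k < n" for k
    using chain[OF xy, of k] below by auto
  have proj_iff: "k \<le> p \<Longrightarrow> is_proj c ((syz c ^^ k) ?M) \<longleftrightarrow> ?s (Suc k) = FF (?s k)" for k
    using st[of k] chain_proj by auto
  have L: "(LEAST k. is_proj c ((syz c ^^ k) ?M)) = p"
  proof (rule Least_equality)
    show "is_proj c ((syz c ^^ p) ?M)" using proj_iff[of p] pP by simp
    fix k assume "is_proj c ((syz c ^^ k) ?M)"
    then show "p \<le> k" using proj_iff below by (metis le_less_linear less_imp_le)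
  qed
  have "\<exists>k. is_proj c ((syz c ^^ k) ?M)" using proj_iff[of p] pP by auto
  then show ?thesis unfolding pdim_def L by simp
qed

definition "AA r m = (FF ^^ m) r"
definition "BB r m = (FF ^^ m) (GG r)"
definition "DD r m = (FF ^^ m) (Suc r)"
definition "aa r = sq r (Suc r)"
definition "bb r = sq (GG r) (Suc r)"
definition "Sproj r k \<longleftrightarrow> aa r (Suc k) = FF (aa r k)"
definition "Iproj r k \<longleftrightarrow> bb r (Suc k) = FF (bb r k)"
definition "tm r k \<longleftrightarrow> (if even k then Iproj r k else Sproj r k)"
definition "ee r = (LEAST k. tm r k)"
definition "ys r = (if odd (ee r) then aa r else bb r)"

lemma aa_even: "aa r (2 * m) = AA r m" unfolding aa_def AA_def by (simp add: sq_even)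
lemma aa_odd: "aa r (Suc (2 * m)) = DD r m" unfolding aa_def DD_def by (simp add: sq_odd)
lemma bb_even: "bb r (2 * m) = BB r m" unfolding bb_def BB_def by (simp add: sq_even)
lemma bb_odd: "bb r (Suc (2 * m)) = DD r m" unfolding bb_def DD_def by (simp add: sq_odd)
lemma AA_Suc: "AA r (Suc m) = FF (AA r m)" unfolding AA_def by simp
lemma BB_Suc: "BB r (Suc m) = FF (BB r m)" unfolding BB_def by simp
lemma DD_Suc: "DD r (Suc m) = FF (DD r m)" unfolding DD_def by simp
lemma ss2: "Suc (Suc (2 * m)) = 2 * Suc m" by simp

lemma order:
  assumes "r < n"
  shows "BB r m \<le> AA r m \<and> AA r m \<le> DD r m \<and> DD r m \<le> BB r (Suc m) \<and> BB r (Suc m) \<le> AA r (Suc m)"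
proof (induction m)
  case 0
  have "GG r \<le> r" "r < FF (GG r)" using GG_props assms by auto
  moreover have "FF (GG r) \<le> FF r" using FF_mono \<open>GG r \<le> r\<close> by simp
  ultimately show ?case unfolding AA_def BB_def DD_def by simp
next
  case (Suc m)
  then have "FF (BB r m) \<le> FF (AA r m)" "FF (AA r m) \<le> FF (DD r m)" "FF (DD r m) \<le> FF (BB r (Suc m))"
    "FF (BB r (Suc m)) \<le> FF (AA r (Suc m))" using FF_mono by blast+
  then show ?case unfolding AA_Suc[of r "Suc m"] BB_Suc[of r "Suc m"] DD_Suc[of r m] AA_Suc[of r m] BB_Suc[of r m]
    by simp
qed

lemma AA_mono: "m \<le> m' \<Longrightarrow> AA r m \<le> AA r m'" unfolding AA_def by (rule FFp_incr)
lemma BB_mono: "m \<le> m' \<Longrightarrow> BB r m \<le> BB r m'" unfolding BB_def by (rule FFp_incr)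
lemma DD_mono: "m \<le> m' \<Longrightarrow> DD r m \<le> DD r m'" unfolding DD_def by (rule FFp_incr)

lemma Iproj_even: "Iproj r (2 * m) \<longleftrightarrow> DD r m = BB r (Suc m)"
  unfolding Iproj_def bb_odd bb_even BB_Suc by simp
lemma Sproj_even: "Sproj r (2 * m) \<longleftrightarrow> DD r m = AA r (Suc m)"
  unfolding Sproj_def aa_odd aa_even AA_Suc by simp
lemma Iproj_odd: "Iproj r (Suc (2 * m)) \<longleftrightarrow> BB r (Suc m) = DD r (Suc m)"
  unfolding Iproj_def ss2 bb_odd bb_even DD_Suc by simp
lemma Sproj_odd: "Sproj r (Suc (2 * m)) \<longleftrightarrow> AA r (Suc m) = DD r (Suc m)"
  unfolding Sproj_def ss2 aa_odd aa_even DD_Suc by simp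

lemma tm_even: "tm r (2 * m) \<longleftrightarrow> DD r m = BB r (Suc m)"
  unfolding tm_def using Iproj_even by simp
lemma tm_odd: "tm r (Suc (2 * m)) \<longleftrightarrow> AA r (Suc m) = DD r (Suc m)"
  unfolding tm_def using Sproj_odd by simp

lemma parity_cases:
  obtains m where "k = 2 * m" | m where "k = Suc (2 * m)"
proof (cases "even k")
  case True then show ?thesis using that(1)[of "k div 2"] by simp
next
  case False then show ?thesis using that(2)[of "k div 2"] by simp
qed

lemma tm_iff:
  assumes "r < n"
  shows "tm r k \<longleftrightarrow> Sproj r k \<or> Iproj r k"
proof (cases k rule: parity_cases)
  case (1 m)
  have "BB r (Suc m) \<le> AA r (Suc m)" "DD r m \<le> BB r (Suc m)" using order[OF assms, of m] by auto
  then show ?thesis unfolding 1 tm_even Sproj_even Iproj_even by auto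
next
  case (2 m)
  have "BB r (Suc m) \<le> AA r (Suc m)" "AA r (Suc m) \<le> DD r (Suc m)" using order[OF assms, of "Suc m"] by auto
  then show ?thesis unfolding 2 tm_odd Sproj_odd Iproj_odd by auto
qed

lemma S_cond: "r < n \<Longrightarrow> r < Suc r \<and> Suc r \<le> FF r \<and> r < n"
  using FF_gt[of r] by simp
lemma I_cond: "r < n \<Longrightarrow> GG r < Suc r \<and> Suc r \<le> FF (GG r) \<and> GG r < n"
  using GG_props[of r] by auto

lemma ex_Sproj: "r < n \<Longrightarrow> \<exists>k. Sproj r k"
  unfolding Sproj_def aa_def using chain_term S_cond by blast
lemma ex_Iproj: "r < n \<Longrightarrow> \<exists>k. Iproj r k"
  unfolding Iproj_def bb_def using chain_term I_cond by blast

lemma ex_tm: "r < n \<Longrightarrow> \<exists>k. tm r k"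
  using ex_Sproj tm_iff by blast

lemma tm_ee: "r < n \<Longrightarrow> tm r (ee r)"
  unfolding ee_def using ex_tm by (metis LeastI)

lemma not_tm: "k < ee r \<Longrightarrow> \<not> tm r k"
  unfolding ee_def by (rule not_less_Least)

lemma e_val_eq:
  assumes r: "r < n"
  shows "e_val c r = enat (ee r)"
proof -
  have pS: "pdim c (simple_mod r) = enat (LEAST k. Sproj r k)"
    using chain_pdim[of r "Suc r"] S_cond[OF r] unfolding simple_mod_def Sproj_def aa_def by simp
  have ie: "inj_env c r = Some (GG r, Suc r - GG r)"
    unfolding inj_env_def GG_def[symmetric] using GG_props(1)[OF r] by (simp add: Let_def Suc_diff_le)
  have pI: "pdim c (inj_env c r) = enat (LEAST k. Iproj r k)"
    unfolding ie using chain_pdim[of "GG r" "Suc r"] I_cond[OF r] unfolding Iproj_def bb_def by simp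
  obtain k1 where k1: "Sproj r k1" using ex_Sproj r by blast
  obtain k2 where k2: "Iproj r k2" using ex_Iproj r by blast
  have "ee r = min (LEAST k. Sproj r k) (LEAST k. Iproj r k)"
    unfolding ee_def
  proof (rule Least_equality)
    show "tm r (min (LEAST k. Sproj r k) (LEAST k. Iproj r k))"
      unfolding tm_iff[OF r] using LeastI[of "Sproj r", OF k1] LeastI[of "Iproj r", OF k2]
      by (simp add: min_def)
    fix k assume "tm r k"
    then have "Sproj r k \<or> Iproj r k" using tm_iff[OF r] by simp
    then show "min (LEAST k. Sproj r k) (LEAST k. Iproj r k) \<le> k"
      by (meson Least_le min.coboundedI1 min.coboundedI2)
  qed
  then show ?thesis unfolding e_val_def pS pI by simp
qed

lemma Sproj_tm: "r < n \<Longrightarrow> Sproj r k \<Longrightarrow> tm r k" using tm_iff by blast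
lemma Iproj_tm: "r < n \<Longrightarrow> Iproj r k \<Longrightarrow> tm r k" using tm_iff by blast

lemma ys_chain:
  assumes r: "r < n" and k: "k \<le> ee r"
  shows "ys r k < ys r (Suc k) \<and> ys r (Suc k) \<le> FF (ys r k) \<and> ys r k < n"
proof (cases "odd (ee r)")
  case True
  have "\<forall>k'<k. \<not> Sproj r k'" using k not_tm Sproj_tm[OF r] by (meson less_le_trans)
  then show ?thesis using chain[of r "Suc r" k] S_cond[OF r] True
    unfolding ys_def Sproj_def aa_def by auto
next
  case False
  have "\<forall>k'<k. \<not> Iproj r k'" using k not_tm Iproj_tm[OF r] by (meson less_le_trans)
  then show ?thesis using chain[of "GG r" "Suc r" k] I_cond[OF r] False
    unfolding ys_def Iproj_def bb_def by auto
qed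

lemma ys_end:
  assumes r: "r < n"
  shows "ys r (Suc (ee r)) = FF (ys r (ee r))"
  using tm_ee[OF r] unfolding tm_def ys_def Sproj_def Iproj_def by (auto split: if_splits)

lemma ys_rec: "ys r (Suc (Suc k)) = FF (ys r k)"
  unfolding ys_def aa_def bb_def by simp

lemma ys_0: "r < n \<Longrightarrow> ys r 0 \<le> r"
  unfolding ys_def aa_def bb_def using GG_props(1) by simp

lemma ys_1: "ys r (Suc 0) = Suc r"
  unfolding ys_def aa_def bb_def by simp

lemma ringel_eq:
  assumes r: "r < n"
  shows "ringel_hperm c r = ys r (ee r)"
proof -
  have te: "the_enat (e_val c r) = ee r" using e_val_eq[OF r] by simp
  show ?thesis
  proof (cases "odd (ee r)")
    case True
    have "\<forall>k'<ee r. \<not> Sproj r k'" using not_tm Sproj_tm[OF r] by blast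
    then have "(syz c ^^ ee r) (Some (r, Suc r - r)) = Some (aa r (ee r), aa r (Suc (ee r)) - aa r (ee r))"
      using chain[of r "Suc r" "ee r"] S_cond[OF r] unfolding Sproj_def aa_def by auto
    then show ?thesis unfolding ringel_hperm_def N_mod_def te using True
      by (simp add: simple_mod_def ys_def)
  next
    case False
    have ie: "inj_env c r = Some (GG r, Suc r - GG r)"
      unfolding inj_env_def GG_def[symmetric] using GG_props(1)[OF r] by (simp add: Let_def Suc_diff_le)
    have "\<forall>k'<ee r. \<not> Iproj r k'" using not_tm Iproj_tm[OF r] by blast
    then have "(syz c ^^ ee r) (Some (GG r, Suc r - GG r)) = Some (bb r (ee r), bb r (Suc (ee r)) - bb r (ee r))"
      using chain[of "GG r" "Suc r" "ee r"] I_cond[OF r] unfolding Iproj_def bb_def by auto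
    then show ?thesis unfolding ringel_hperm_def N_mod_def te using False
      by (simp add: ie ys_def)
  qed
qed

definition RR :: "nat \<Rightarrow> nat \<Rightarrow> nat" where
  "RR j x = (FF ^^ (LEAST m. j \<le> (FF ^^ m) x)) x"

lemma RR_eq:
  assumes "j \<le> (FF ^^ m) x" "\<And>m'. m' < m \<Longrightarrow> (FF ^^ m') x < j"
  shows "RR j x = (FF ^^ m) x"
proof -
  have "(LEAST m. j \<le> (FF ^^ m) x) = m"
  proof (rule Least_equality)
    show "j \<le> (FF ^^ m) x" by fact
    fix y assume "j \<le> (FF ^^ y) x"
    show "m \<le> y"
    proof (rule ccontr)
      assume "\<not> m \<le> y"
      then have "y < m" by simp
      from assms(2)[OF this] \<open>j \<le> (FF ^^ y) x\<close> show False by simp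
    qed
  qed
  then show ?thesis unfolding RR_def by simp
qed

lemma RR_ex:
  assumes "j \<le> n"
  obtains m where "j \<le> (FF ^^ m) x" "\<And>m'. m' < m \<Longrightarrow> (FF ^^ m') x < j" "RR j x = (FF ^^ m) x"
proof -
  have ex: "j \<le> (FF ^^ j) x" using FFp_reach[of x j] assms by simp
  let ?m = "LEAST m. j \<le> (FF ^^ m) x"
  have "j \<le> (FF ^^ ?m) x" by (rule LeastI[of _ j], rule ex)
  moreover have "(FF ^^ m') x < j" if "m' < ?m" for m'
    using not_less_Least[OF that] by simp
  ultimately show ?thesis using that[of ?m] unfolding RR_def by blast
qed

lemma RR_step:
  assumes "x < j" "j \<le> n"
  shows "RR j x = RR j (FF x)"
proof -
  obtain m where m: "j \<le> (FF ^^ m) x" "\<And>m'. m' < m \<Longrightarrow> (FF ^^ m') x < j" "RR j x = (FF ^^ m) x"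
    using RR_ex[OF assms(2)] by blast
  have "m \<noteq> 0"
  proof
    assume "m = 0"
    then show False using m(1) assms(1) by simp
  qed
  then obtain m0 where m0: "m = Suc m0" by (cases m) auto
  have fs: "(FF ^^ Suc k) x = (FF ^^ k) (FF x)" for k by (simp add: funpow_Suc_right del: funpow.simps)
  have "RR j (FF x) = (FF ^^ m0) (FF x)"
  proof (rule RR_eq)
    show "j \<le> (FF ^^ m0) (FF x)" using m(1) unfolding m0 fs .
    fix m' assume "m' < m0"
    then have "Suc m' < m" using m0 by simp
    from m(2)[OF this] show "(FF ^^ m') (FF x) < j" unfolding fs .
  qed
  then show ?thesis using m(3) fs m0 by simp
qed

lemma RR_succ:
  assumes "j < n"
  shows "RR (Suc j) x = (if RR j x = j then FF j else RR j x)"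
proof -
  obtain m where m: "j \<le> (FF ^^ m) x" "\<And>m'. m' < m \<Longrightarrow> (FF ^^ m') x < j" "RR j x = (FF ^^ m) x"
  proof -
    have "j \<le> n" using assms by simp
    from RR_ex[OF this, of x] show ?thesis using that by blast
  qed
  show ?thesis
  proof (cases "(FF ^^ m) x = j")
    case True
    have "RR (Suc j) x = (FF ^^ Suc m) x"
    proof (rule RR_eq)
      show "Suc j \<le> (FF ^^ Suc m) x" using True FF_gt[OF assms] by simp
      fix m' assume "m' < Suc m"
      show "(FF ^^ m') x < Suc j"
      proof (cases "m' = m")
        case True then show ?thesis using \<open>(FF ^^ m) x = j\<close> by simp
      next
        case False
        then have "m' < m" using \<open>m' < Suc m\<close> by simp
        from m(2)[OF this] show ?thesis by simp
      qed
    qed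
    then show ?thesis using True m(3) by simp
  next
    case False
    have "RR (Suc j) x = (FF ^^ m) x"
    proof (rule RR_eq)
      show "Suc j \<le> (FF ^^ m) x" using False m(1) by simp
      fix m' assume "m' < m"
      then show "(FF ^^ m') x < Suc j" using m(2) by fastforce
    qed
    then show ?thesis using False m(3) by simp
  qed
qed

lemma RR_reduce:
  assumes r: "r < n" and j: "GG r \<le> j" "j \<le> n"
  shows "d \<le> r \<Longrightarrow> \<exists>d'. GG r \<le> d' \<and> d' \<le> r \<and> RR j d = RR j d'"
proof (induction "r - d" arbitrary: d rule: less_induct)
  case less
  show ?case
  proof (cases "GG r \<le> d")
    case True then show ?thesis using less.prems by blast
  next
    case False
    then have d1: "FF d \<le> r" using GG_props(3)[OF r] by simp
    have d2: "d < FF d" using FF_gt[of d] less.prems r by simp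
    have "RR j d = RR j (FF d)" using RR_step[of d j] False j by simp
    moreover obtain d' where "GG r \<le> d' \<and> d' \<le> r \<and> RR j (FF d) = RR j d'"
      using less.hyps[of "FF d"] d1 d2 less.prems by fastforce
    ultimately show ?thesis by metis
  qed
qed

lemma orbit_between:
  assumes "r < n" "GG r \<le> d" "d \<le> r"
  shows "BB r k \<le> (FF ^^ k) d \<and> (FF ^^ k) d \<le> AA r k"
  using FFp_mono[of "GG r" d k] FFp_mono[of d r k] assms unfolding AA_def BB_def by simp

definition "hh r = ys r (ee r)"

lemma hh_lt: "r < n \<Longrightarrow> hh r < n"
  unfolding hh_def using ys_chain[of r "ee r"] by simp

lemma AA_lt_DD_aux:
  assumes "\<forall>k'<m'. AA r (Suc k') < DD r (Suc k')" "m \<le> m'"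
  shows "AA r m < DD r m"
proof (cases m)
  case 0 then show ?thesis unfolding AA_def DD_def by simp
next
  case (Suc k) then show ?thesis using assms by auto
qed

lemma case_even:
  assumes r: "r < n" and e: "ee r = 2 * m"
  shows "(\<forall>k'<m. DD r k' < BB r (Suc k')) \<and> (\<forall>k'<m. AA r (Suc k') < DD r (Suc k'))
    \<and> DD r m = BB r (Suc m) \<and> hh r = BB r m \<and> AA r m < DD r m"
proof -
  have 1: "\<forall>k'<m. DD r k' < BB r (Suc k')"
  proof (intro allI impI)
    fix k' assume "k' < m"
    then have "\<not> tm r (2 * k')" using not_tm e by simp
    then show "DD r k' < BB r (Suc k')" using tm_even order[OF r, of k'] by (simp add: order.strict_iff_order)
  qed
  have 2: "\<forall>k'<m. AA r (Suc k') < DD r (Suc k')"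
  proof (intro allI impI)
    fix k' assume "k' < m"
    then have "\<not> tm r (Suc (2 * k'))" using not_tm e by simp
    then show "AA r (Suc k') < DD r (Suc k')" using tm_odd order[OF r, of "Suc k'"] by (simp add: order.strict_iff_order)
  qed
  have 3: "DD r m = BB r (Suc m)" using tm_ee[OF r] e tm_even by simp
  have 4: "hh r = BB r m" unfolding hh_def ys_def using e bb_even by simp
  have 5: "AA r m < DD r m" using AA_lt_DD_aux[OF 2] by simp
  show ?thesis using 1 2 3 4 5 by blast
qed

lemma case_odd:
  assumes r: "r < n" and e: "ee r = Suc (2 * m)"
  shows "(\<forall>k'\<le>m. DD r k' < BB r (Suc k')) \<and> (\<forall>k'<m. AA r (Suc k') < DD r (Suc k'))
    \<and> AA r (Suc m) = DD r (Suc m) \<and> hh r = DD r m \<and> AA r m < DD r m"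
proof -
  have 1: "\<forall>k'\<le>m. DD r k' < BB r (Suc k')"
  proof (intro allI impI)
    fix k' assume "k' \<le> m"
    then have "\<not> tm r (2 * k')" using not_tm e by simp
    then show "DD r k' < BB r (Suc k')" using tm_even order[OF r, of k'] by (simp add: order.strict_iff_order)
  qed
  have 2: "\<forall>k'<m. AA r (Suc k') < DD r (Suc k')"
  proof (intro allI impI)
    fix k' assume "k' < m"
    then have "\<not> tm r (Suc (2 * k'))" using not_tm e by simp
    then show "AA r (Suc k') < DD r (Suc k')" using tm_odd order[OF r, of "Suc k'"] by (simp add: order.strict_iff_order)
  qed
  have 3: "AA r (Suc m) = DD r (Suc m)" using tm_ee[OF r] e tm_odd by simp
  have 4: "hh r = DD r m" unfolding hh_def ys_def using e aa_odd by simp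
  have 5: "AA r m < DD r m" using AA_lt_DD_aux[OF 2] by simp
  show ?thesis using 1 2 3 4 5 by blast
qed

lemma BB_le_DD: "r < n \<Longrightarrow> BB r m \<le> DD r m" using order[of r m] by simp
lemma DD_le_BB: "r < n \<Longrightarrow> DD r m \<le> BB r (Suc m)" using order[of r m] by simp
lemma AA_le_DD: "r < n \<Longrightarrow> AA r m \<le> DD r m" using order[of r m] by simp
lemma BB_le_AA: "r < n \<Longrightarrow> BB r m \<le> AA r m" using order[of r m] by simp

lemma P2:
  assumes r: "r < n" and d: "d \<le> r"
  shows "RR (hh r) d \<noteq> RR (hh r) (Suc r)"
proof -
  let ?j = "hh r"
  have jn: "?j < n" using hh_lt[OF r] .
  show ?thesis
  proof (cases "ee r" rule: parity_cases)
    case (1 m)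
    note C = case_even[OF r 1]
    have jB: "?j = BB r m" using C by blast
    have "GG r \<le> ?j" using jB BB_mono[of 0 m r] unfolding BB_def by simp
    then obtain d' where d': "GG r \<le> d'" "d' \<le> r" "RR ?j d = RR ?j d'"
    proof -
      have "?j \<le> n" using jn by simp
      from RR_reduce[OF r \<open>GG r \<le> ?j\<close> this d] show ?thesis using that by blast
    qed
    have ob: "BB r k \<le> (FF ^^ k) d' \<and> (FF ^^ k) d' \<le> AA r k" for k using orbit_between[OF r d'(1,2)] .
    have bnd: "BB r (Suc k') \<le> ?j" if "k' < m" for k' using jB BB_mono that by simp
    have R1: "RR ?j d' = (FF ^^ m) d'"
    proof (rule RR_eq)
      show "?j \<le> (FF ^^ m) d'" using ob jB by simp
      fix m' assume m': "m' < m"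
      have "(FF ^^ m') d' \<le> AA r m'" using ob by simp
      also have "\<dots> \<le> DD r m'" using AA_le_DD[OF r] .
      also have "\<dots> < BB r (Suc m')" using C m' by blast
      also have "\<dots> \<le> ?j" using bnd m' by simp
      finally show "(FF ^^ m') d' < ?j" .
    qed
    have R2: "RR ?j (Suc r) = DD r m"
      unfolding DD_def
    proof (rule RR_eq)
      show "?j \<le> (FF ^^ m) (Suc r)" using jB BB_le_DD[OF r, of m] unfolding DD_def by simp
      fix m' assume m': "m' < m"
      have "(FF ^^ m') (Suc r) < BB r (Suc m')" using C m' unfolding DD_def by blast
      also have "\<dots> \<le> ?j" using bnd m' by simp
      finally show "(FF ^^ m') (Suc r) < ?j" .
    qed
    have "(FF ^^ m) d' \<le> AA r m" using ob[of m] by blast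
    moreover have "AA r m < DD r m" using C by blast
    ultimately have "(FF ^^ m) d' < DD r m" by (rule le_less_trans)
    then show ?thesis using R1 R2 d'(3) by simp
  next
    case (2 m)
    note C = case_odd[OF r 2]
    have jD: "?j = DD r m" using C by blast
    have "BB r 0 \<le> BB r m" using BB_mono[of 0 m r] by simp
    also have "\<dots> \<le> DD r m" using BB_le_DD[OF r, of m] .
    finally have "GG r \<le> ?j" using jD unfolding BB_def by simp
    then obtain d' where d': "GG r \<le> d'" "d' \<le> r" "RR ?j d = RR ?j d'"
    proof -
      have "?j \<le> n" using jn by simp
      from RR_reduce[OF r \<open>GG r \<le> ?j\<close> this d] show ?thesis using that by blast
    qed
    have ob: "BB r k \<le> (FF ^^ k) d' \<and> (FF ^^ k) d' \<le> AA r k" for k using orbit_between[OF r d'(1,2)] .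
    have "\<forall>k'\<le>m. DD r k' < BB r (Suc k')" using C by blast
    then have jlt: "?j < BB r (Suc m)" using jD by simp
    have R1: "RR ?j d' = (FF ^^ Suc m) d'"
    proof (rule RR_eq)
      show "?j \<le> (FF ^^ Suc m) d'" using ob[of "Suc m"] jlt by simp
      fix m' assume m': "m' < Suc m"
      have "(FF ^^ m') d' \<le> AA r m'" using ob by simp
      also have "\<dots> \<le> AA r m" using AA_mono m' by simp
      also have "\<dots> < DD r m" using C by blast
      finally show "(FF ^^ m') d' < ?j" using jD by simp
    qed
    have R2: "RR ?j (Suc r) = DD r m"
      unfolding DD_def
    proof (rule RR_eq)
      show "?j \<le> (FF ^^ m) (Suc r)" using jD unfolding DD_def by simp
      fix m' assume m': "m' < m"
      have "DD r m' < BB r (Suc m')" using C m' by simp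
      then have "(FF ^^ m') (Suc r) < BB r (Suc m')" unfolding DD_def .
      also have "\<dots> \<le> DD r (Suc m')" using BB_le_DD[OF r] .
      also have "\<dots> \<le> DD r m" using DD_mono m' by simp
      finally show "(FF ^^ m') (Suc r) < ?j" using jD by simp
    qed
    have "DD r m < (FF ^^ Suc m) d'" using ob[of "Suc m"] jlt jD by simp
    then show ?thesis using R1 R2 d'(3) by simp
  qed
qed

lemma P1:
  assumes r: "r < n"
  shows "\<exists>d\<le>r. RR (Suc (hh r)) d = RR (Suc (hh r)) (Suc r)"
proof -
  let ?j = "hh r"
  have jn: "?j < n" using hh_lt[OF r] .
  show ?thesis
  proof (cases "ee r" rule: parity_cases)
    case (1 m)
    note C = case_even[OF r 1]
    have jB: "?j = BB r m" using C by blast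
    have FFj: "BB r (Suc m) = FF ?j" using jB BB_Suc by simp
    have gt: "Suc ?j \<le> FF ?j" using FF_gt[OF jn] by simp
    have R1: "RR (Suc ?j) (GG r) = BB r (Suc m)"
      unfolding BB_def
    proof (rule RR_eq)
      show "Suc ?j \<le> (FF ^^ Suc m) (GG r)" using FFj gt unfolding BB_def by simp
      fix m' assume "m' < Suc m"
      then have "BB r m' \<le> BB r m" using BB_mono by simp
      then show "(FF ^^ m') (GG r) < Suc ?j" using jB unfolding BB_def by simp
    qed
    have R2: "RR (Suc ?j) (Suc r) = DD r m"
      unfolding DD_def
    proof (rule RR_eq)
      show "Suc ?j \<le> (FF ^^ m) (Suc r)" using FFj gt C unfolding DD_def by simp
      fix m' assume m': "m' < m"
      have "(FF ^^ m') (Suc r) < BB r (Suc m')" using C m' unfolding DD_def by blast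
      also have "\<dots> \<le> BB r m" using BB_mono m' by simp
      finally show "(FF ^^ m') (Suc r) < Suc ?j" using jB by simp
    qed
    have "GG r \<le> r" using GG_props(1)[OF r] .
    then show ?thesis using R1 R2 C by auto
  next
    case (2 m)
    note C = case_odd[OF r 2]
    have jD: "?j = DD r m" using C by blast
    have FFj: "DD r (Suc m) = FF ?j" using jD DD_Suc by simp
    have gt: "Suc ?j \<le> FF ?j" using FF_gt[OF jn] by simp
    have R1: "RR (Suc ?j) r = AA r (Suc m)"
      unfolding AA_def
    proof (rule RR_eq)
      show "Suc ?j \<le> (FF ^^ Suc m) r" using FFj gt C unfolding AA_def by simp
      fix m' assume "m' < Suc m"
      then have "AA r m' \<le> AA r m" using AA_mono by simp
      then show "(FF ^^ m') r < Suc ?j" using jD C unfolding AA_def by simp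
    qed
    have R2: "RR (Suc ?j) (Suc r) = DD r (Suc m)"
      unfolding DD_def
    proof (rule RR_eq)
      show "Suc ?j \<le> (FF ^^ Suc m) (Suc r)" using FFj gt unfolding DD_def by simp
      fix m' assume "m' < Suc m"
      then have "DD r m' \<le> DD r m" using DD_mono by simp
      then show "(FF ^^ m') (Suc r) < Suc ?j" using jD unfolding DD_def by simp
    qed
    show ?thesis using R1 R2 C by auto
  qed
qed

lemma hh_inj_aux:
  assumes rr: "r < r'" "r' < n"
  shows "hh r \<noteq> hh r'"
proof
  assume eq: "hh r = hh r'"
  let ?j = "hh r"
  have r: "r < n" using rr by simp
  have jn: "?j < n" using hh_lt[OF r] .
  have key: "\<And>u v. RR ?j u \<noteq> RR ?j v \<Longrightarrow> RR (Suc ?j) u = RR (Suc ?j) v \<Longrightarrow>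
      (RR ?j u = ?j \<and> RR ?j v = FF ?j) \<or> (RR ?j v = ?j \<and> RR ?j u = FF ?j)"
    using RR_succ[OF jn] by (metis)
  obtain d where d: "d \<le> r" "RR (Suc ?j) d = RR (Suc ?j) (Suc r)" using P1[OF r] by blast
  have n1: "RR ?j d \<noteq> RR ?j (Suc r)" using P2[OF r d(1)] .
  obtain d' where d': "d' \<le> r'" "RR (Suc ?j) d' = RR (Suc ?j) (Suc r')" using P1[OF rr(2)] eq by auto
  have n2: "RR ?j d' \<noteq> RR ?j (Suc r')" using P2[OF rr(2) d'(1)] eq by simp
  have n3: "RR ?j d \<noteq> RR ?j (Suc r')" using P2[OF rr(2), of d] d(1) rr eq by simp
  have n4: "RR ?j (Suc r) \<noteq> RR ?j (Suc r')" using P2[OF rr(2), of "Suc r"] rr eq by simp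
  from key[OF n1 d(2)] key[OF n2 d'(2)] n3 n4 show False by auto
qed

lemma hh_inj: "inj_on hh {..<n}"
  unfolding inj_on_def
  by (metis hh_inj_aux lessThan_iff nat_neq_iff)

lemma hh_bij: "bij_betw hh {..<n} {..<n}"
proof -
  have "hh ` {..<n} \<subseteq> {..<n}" using hh_lt by auto
  then have "hh ` {..<n} = {..<n}" using hh_inj by (simp add: endo_inj_surj)
  then show ?thesis using hh_inj by (simp add: bij_betw_def)
qed

end



lemma telescope:
  fixes y :: "nat \<Rightarrow> nat"
  shows "(\<forall>k \<le> Suc e. y k \<le> y (Suc k)) \<Longrightarrow>
    (\<Sum>k\<le>e. (-1::rat)^k * (if y k \<le> i \<and> i < y (Suc (Suc k)) then 1 else 0)) =
    (if y 0 \<le> i \<and> i < y 1 then 1 else 0) + (-1)^e * (if y (Suc e) \<le> i \<and> i < y (Suc (Suc e)) then 1 else 0)"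
proof (induction e)
  case 0
  then have "y 0 \<le> y 1" "y 1 \<le> y 2" by (auto simp: numeral_2_eq_2)
  then show ?case by (auto simp: numeral_2_eq_2)
next
  case (Suc e)
  then have IH: "(\<Sum>k\<le>e. (-1::rat)^k * (if y k \<le> i \<and> i < y (Suc (Suc k)) then 1 else 0)) =
    (if y 0 \<le> i \<and> i < y 1 then 1 else 0) + (-1)^e * (if y (Suc e) \<le> i \<and> i < y (Suc (Suc e)) then 1 else 0)"
    by simp
  have m1: "y (Suc e) \<le> y (Suc (Suc e))" "y (Suc (Suc e)) \<le> y (Suc (Suc (Suc e)))" using Suc.prems by auto
  have split: "(if y (Suc e) \<le> i \<and> i < y (Suc (Suc (Suc e))) then 1 else 0 :: rat) =
     (if y (Suc e) \<le> i \<and> i < y (Suc (Suc e)) then 1 else 0) + (if y (Suc (Suc e)) \<le> i \<and> i < y (Suc (Suc (Suc e))) then 1 else 0)"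
    using m1 by auto
  show ?case unfolding sum.atMost_Suc IH split by (simp add: algebra_simps)
qed

context nak
begin

lemma ys_strict: "r < n \<Longrightarrow> k < k' \<Longrightarrow> k' \<le> ee r \<Longrightarrow> ys r k < ys r k'"
proof (induction k')
  case 0 then show ?case by simp
next
  case (Suc k')
  have a: "ys r k' < ys r (Suc k')" using ys_chain[OF Suc.prems(1), of k'] Suc.prems by simp
  show ?case
  proof (cases "k = k'")
    case True then show ?thesis using a by simp
  next
    case False
    then have "ys r k < ys r k'" using Suc by simp
    then show ?thesis using a by simp
  qed
qed

lemma ys_lt_n: "r < n \<Longrightarrow> k \<le> ee r \<Longrightarrow> ys r k < n" using ys_chain by blast

lemma vec_ident:
  assumes r: "r < n"
  shows "(\<Sum>k\<le>ee r. (-1::rat)^k * (if ys r k \<le> i \<and> i < FF (ys r k) then 1 else 0)) =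
    (if ys r 0 \<le> i \<and> i \<le> r then 1 else 0)"
proof -
  let ?e = "ee r"
  have mono: "\<forall>k \<le> Suc ?e. ys r k \<le> ys r (Suc k)"
  proof (intro allI impI)
    fix k assume k: "k \<le> Suc ?e"
    show "ys r k \<le> ys r (Suc k)"
    proof (cases "k \<le> ?e")
      case True then show ?thesis using ys_chain[OF r True] by simp
    next
      case False
      then have "k = Suc ?e" using k by simp
      then show ?thesis using ys_end[OF r] ys_rec[of r ?e] by simp
    qed
  qed
  have "(\<Sum>k\<le>?e. (-1::rat)^k * (if ys r k \<le> i \<and> i < FF (ys r k) then 1 else 0)) =
     (\<Sum>k\<le>?e. (-1::rat)^k * (if ys r k \<le> i \<and> i < ys r (Suc (Suc k)) then 1 else 0))"
    by (simp add: ys_rec)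
  also have "\<dots> = (if ys r 0 \<le> i \<and> i < ys r 1 then 1 else 0) +
     (-1)^?e * (if ys r (Suc ?e) \<le> i \<and> i < ys r (Suc (Suc ?e)) then 1 else 0)"
    using telescope[OF mono] .
  also have "ys r (Suc (Suc ?e)) = ys r (Suc ?e)" using ys_end[OF r] ys_rec[of r ?e] by simp
  finally show ?thesis using ys_1[of r] by auto
qed

definition Ym :: "rat mat" where
  "Ym = mat n n (\<lambda>(l, r). \<Sum>k\<le>ee r. if ys r k = l then (-1::rat)^(ee r + k) else 0)"

definition Um :: "rat mat" where
  "Um = mat n n (\<lambda>(i, r). if ys r 0 \<le> i \<and> i \<le> r then (-1::rat)^(ee r) else 0)"

lemma Ym_carrier: "Ym \<in> carrier_mat n n" unfolding Ym_def by simp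
lemma Um_carrier: "Um \<in> carrier_mat n n" unfolding Um_def by simp
lemma Cm_carrier: "cartan n c \<in> carrier_mat n n" unfolding cartan_def by simp

lemma Cm_entry: "i < n \<Longrightarrow> l < n \<Longrightarrow> cartan n c $$ (i, l) = (if l \<le> i \<and> i < FF l then 1 else 0)"
  unfolding cartan_def by (simp add: FF_lt)

lemma CY: "cartan n c * Ym = Um"
proof (rule eq_matI)
  show "dim_row (cartan n c * Ym) = dim_row Um" "dim_col (cartan n c * Ym) = dim_col Um"
    using Ym_carrier Um_carrier Cm_carrier by auto
  fix i r assume i: "i < dim_row Um" and r: "r < dim_col Um"
  then have i: "i < n" and r: "r < n" using Um_carrier by auto
  let ?e = "ee r"
  let ?s = "\<lambda>k. (-1::rat)^(?e + k)"
  have "(cartan n c * Ym) $$ (i, r) = (\<Sum>l<n. cartan n c $$ (i, l) * Ym $$ (l, r))"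
    using mult_entry[OF Cm_carrier Ym_carrier i r] .
  also have "\<dots> = (\<Sum>l<n. \<Sum>k\<le>?e. if ys r k = l then ?s k * cartan n c $$ (i, l) else 0)"
    unfolding Ym_def using r by (intro sum.cong) (auto simp: sum_distrib_left intro!: sum.cong)
  also have "\<dots> = (\<Sum>k\<le>?e. \<Sum>l<n. if ys r k = l then ?s k * cartan n c $$ (i, l) else 0)"
    by (rule sum.swap)
  also have "\<dots> = (\<Sum>k\<le>?e. ?s k * cartan n c $$ (i, ys r k))"
    using ys_lt_n[OF r] by (intro sum.cong) auto
  also have "\<dots> = (\<Sum>k\<le>?e. (-1)^?e * ((-1::rat)^k * (if ys r k \<le> i \<and> i < FF (ys r k) then 1 else 0)))"
    using ys_lt_n[OF r] i by (intro sum.cong) (auto simp: Cm_entry power_add)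
  also have "\<dots> = (-1)^?e * (\<Sum>k\<le>?e. (-1::rat)^k * (if ys r k \<le> i \<and> i < FF (ys r k) then 1 else 0))"
    by (simp add: sum_distrib_left)
  also have "\<dots> = Um $$ (i, r)" unfolding vec_ident[OF r] Um_def using i r by simp
  finally show "(cartan n c * Ym) $$ (i, r) = Um $$ (i, r)" .
qed

lemma Ym_upper: "l < n \<Longrightarrow> r < n \<Longrightarrow> hh r < l \<Longrightarrow> Ym $$ (l, r) = 0"
proof -
  assume l: "l < n" and r: "r < n" and lt: "hh r < l"
  have "ys r k \<noteq> l" if "k \<le> ee r" for k
  proof -
    have "ys r k \<le> hh r" unfolding hh_def using ys_strict[OF r, of k "ee r"] that
      by (cases "k = ee r") auto
    then show ?thesis using lt by simp
  qed
  then show "Ym $$ (l, r) = 0" unfolding Ym_def using l r by simp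
qed

lemma Ym_diag: "r < n \<Longrightarrow> Ym $$ (hh r, r) = 1"
proof -
  assume r: "r < n"
  have "(\<Sum>k\<le>ee r. if ys r k = hh r then (-1::rat)^(ee r + k) else 0) =
      (\<Sum>k\<le>ee r. if k = ee r then (-1::rat)^(ee r + ee r) else 0)"
  proof (intro sum.cong refl)
    fix k assume k: "k \<in> {..ee r}"
    show "(if ys r k = hh r then (-1::rat)^(ee r + k) else 0) = (if k = ee r then (-1::rat)^(ee r + ee r) else 0)"
    proof (cases "k = ee r")
      case True then show ?thesis unfolding hh_def by simp
    next
      case False
      then have "ys r k < hh r" unfolding hh_def using ys_strict[OF r, of k "ee r"] k by simp
      then show ?thesis using False by simp
    qed
  qed
  also have "\<dots> = 1" by (simp flip: mult_2)
  finally show ?thesis unfolding Ym_def using r hh_lt[OF r] by simp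
qed

definition hinv :: "nat \<Rightarrow> nat" where "hinv = the_inv_into {..<n} hh"

lemma hinv_props: "j < n \<Longrightarrow> hinv j < n \<and> hh (hinv j) = j"
  unfolding hinv_def using hh_bij
  by (metis bij_betw_def f_the_inv_into_f lessThan_iff the_inv_into_into subset_refl image_eqI)

lemma hinv_hh: "r < n \<Longrightarrow> hinv (hh r) = r"
  unfolding hinv_def using hh_bij by (simp add: bij_betw_def the_inv_into_f_f)

definition Tm :: "rat mat" where "Tm = mat n n (\<lambda>(i, j). Ym $$ (i, hinv j))"

lemma Tm_carrier: "Tm \<in> carrier_mat n n" unfolding Tm_def by simp

lemma TP: "Tm * perm_mat n hh = Ym"
proof (rule eq_matI)
  show "dim_row (Tm * perm_mat n hh) = dim_row Ym" "dim_col (Tm * perm_mat n hh) = dim_col Ym"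
    using Tm_carrier Ym_carrier perm_mat_carrier[of n hh] by auto
  fix i r assume "i < dim_row Ym" "r < dim_col Ym"
  then have i: "i < n" and r: "r < n" using Ym_carrier by auto
  have "(Tm * perm_mat n hh) $$ (i, r) = Tm $$ (i, hh r)"
    using mult_perm_entry[of Tm n i r hh, OF Tm_carrier i r hh_lt[OF r]] .
  also have "\<dots> = Ym $$ (i, r)" unfolding Tm_def using i hh_lt[OF r] hinv_hh[OF r] by simp
  finally show "(Tm * perm_mat n hh) $$ (i, r) = Ym $$ (i, r)" .
qed

lemma Tm_upper: "upper_triangular Tm"
proof (rule upper_triangularI)
  fix i j assume ji: "j < i" and i: "i < dim_row Tm"
  then have i': "i < n" and j: "j < n" using Tm_carrier by auto
  have "Ym $$ (i, hinv j) = 0" using Ym_upper[OF i'] hinv_props[OF j] ji by simp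
  then show "Tm $$ (i, j) = 0" unfolding Tm_def using i' j by simp
qed

lemma Tm_diag: "j < n \<Longrightarrow> Tm $$ (j, j) = 1"
  unfolding Tm_def using hinv_props[of j] Ym_diag[of "hinv j"] by simp

lemma Um_upper: "upper_triangular Um"
  by (rule upper_triangularI) (auto simp: Um_def)

lemma Um_diag: "r < n \<Longrightarrow> Um $$ (r, r) \<noteq> 0"
  unfolding Um_def using ys_0[of r] by simp

lemma CT_upper: "upper_triangular (transpose_mat (cartan n c))"
  by (rule upper_triangularI) (auto simp: cartan_def)

lemma CT_diag: "i < n \<Longrightarrow> transpose_mat (cartan n c) $$ (i, i) = 1"
  unfolding cartan_def using c_pos[of i] by simp

lemma perm_hh: "is_perm_mat n (perm_mat n hh)"
  unfolding is_perm_mat_def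
proof (intro conjI allI impI)
  show "perm_mat n hh \<in> carrier_mat n n" by (rule perm_mat_carrier)
  fix i j assume "i < n" "j < n"
  then show "perm_mat n hh $$ (i, j) = 0 \<or> perm_mat n hh $$ (i, j) = 1" by (simp add: perm_mat_entry)
next
  fix j assume j: "j < n"
  show "\<exists>!i. i < n \<and> perm_mat n hh $$ (i, j) = 1"
  proof (rule ex1I[of _ "hh j"])
    show "hh j < n \<and> perm_mat n hh $$ (hh j, j) = 1" using j hh_lt[OF j] by (simp add: perm_mat_entry)
    fix i assume "i < n \<and> perm_mat n hh $$ (i, j) = 1"
    then show "i = hh j" using j by (auto simp: perm_mat_entry split: if_splits)
  qed
next
  fix i assume i: "i < n"
  show "\<exists>!j. j < n \<and> perm_mat n hh $$ (i, j) = 1"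
  proof (rule ex1I[of _ "hinv i"])
    show "hinv i < n \<and> perm_mat n hh $$ (i, hinv i) = 1" using hinv_props[OF i] i by (simp add: perm_mat_entry)
    fix j assume "j < n \<and> perm_mat n hh $$ (i, j) = 1"
    then have "j < n" "i = hh j" using i by (auto simp: perm_mat_entry split: if_splits)
    then show "j = hinv i" using hinv_hh by simp
  qed
qed

end


lemma upper_uminus:
  fixes A :: "rat mat"
  assumes "A \<in> carrier_mat n n" "upper_triangular A"
  shows "upper_triangular (- A)"
proof (rule upper_triangularI)
  fix i j assume "j < i" "i < dim_row (- A)"
  then show "(- A) $$ (i, j) = 0" using assms by (auto simp: upper_triangularD)
qed

theorem theorem3p1:
  fixes n :: nat and c :: "nat \<Rightarrow> nat"
  assumes "kupisch n c"
  shows "is_coxeter_perm n (coxeter n c) (ringel_hperm c)"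
proof -
  interpret N: nak n c by (unfold_locales, rule assms)
  let ?C = "cartan n c"
  let ?P = "perm_mat n N.hh"
  have Cc: "?C \<in> carrier_mat n n" by (rule N.Cm_carrier)
  have Pc: "?P \<in> carrier_mat n n" by (rule perm_mat_carrier)
  have Tc: "N.Tm \<in> carrier_mat n n" by (rule N.Tm_carrier)
  have Uc: "N.Um \<in> carrier_mat n n" by (rule N.Um_carrier)
  have Yc: "N.Ym \<in> carrier_mat n n" by (rule N.Ym_carrier)
  have CTc: "transpose_mat ?C \<in> carrier_mat n n" using Cc by simp
  have dU: "det N.Um \<noteq> 0" using upper_det_diag[OF Uc N.Um_upper] N.Um_diag by simp
  obtain Ui where Ui: "Ui \<in> carrier_mat n n" "N.Um * Ui = 1\<^sub>m n" "Ui * N.Um = 1\<^sub>m n"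
    using inverse_ex[OF Uc dU] by blast
  have uUi: "upper_triangular Ui" using upper_inv[OF Uc Ui(1) N.Um_upper N.Um_diag Ui(2)] .
  define Bi where "Bi = N.Tm * ?P * Ui"
  have Bic: "Bi \<in> carrier_mat n n" unfolding Bi_def using Tc Pc Ui by auto
  have CB: "?C * Bi = 1\<^sub>m n"
  proof -
    have "?C * Bi = (?C * (N.Tm * ?P)) * Ui"
      unfolding Bi_def using Cc Tc Pc Ui(1) by (simp add: assoc_mult_mat[of _ n n _ n _ n])
    also have "\<dots> = 1\<^sub>m n" using N.TP N.CY Ui(2) by simp
    finally show ?thesis .
  qed
  have dC: "det ?C \<noteq> 0"
    using det_mult[OF Cc Bic] CB by (auto simp: det_one)
  obtain B' where B': "mat_inverse ?C = Some B'"
  proof (cases "mat_inverse ?C")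
    case None
    from mat_inverse(1)[OF Cc None] have "?C \<notin> Units (ring_mat TYPE(rat) n ())" .
    moreover have "?C \<in> Units (ring_mat TYPE(rat) n ())" by (rule det_non_zero_imp_unit[OF Cc dC])
    ultimately show ?thesis by blast
  next
    case (Some B) then show ?thesis using that by blast
  qed
  have B'p: "?C * B' = 1\<^sub>m n" "B' * ?C = 1\<^sub>m n" "B' \<in> carrier_mat n n" using mat_inverse(2)[OF Cc B'] by auto
  have BB: "B' = Bi"
  proof -
    have "B' = B' * (?C * Bi)" using CB B'p(3) by simp
    also have "\<dots> = (B' * ?C) * Bi" using B'p(3) Cc Bic by (simp add: assoc_mult_mat[of _ n n _ n _ n])
    also have "\<dots> = Bi" using B'p(2) Bic by simp
    finally show ?thesis .
  qed
  define U1 where "U1 = - (transpose_mat ?C * N.Tm)"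
  have U1c: "U1 \<in> carrier_mat n n" unfolding U1_def using CTc Tc by simp
  have uU1: "upper_triangular U1"
    unfolding U1_def by (rule upper_uminus[of _ n], use CTc Tc in simp, rule upper_mult(1)[OF CTc Tc N.CT_upper N.Tm_upper])
  have dgU1: "U1 $$ (i, i) \<noteq> 0" if "i < n" for i
    unfolding U1_def using upper_mult(2)[OF CTc Tc N.CT_upper N.Tm_upper that] N.CT_diag[OF that] N.Tm_diag[OF that]
      that CTc Tc by simp
  have cox: "coxeter n c = U1 * ?P * Ui"
  proof -
    have "coxeter n c = - (transpose_mat ?C * Bi)" unfolding coxeter_def B' BB by simp
    also have "transpose_mat ?C * Bi = (transpose_mat ?C * N.Tm) * ?P * Ui"
      unfolding Bi_def using CTc Tc Pc Ui(1) by (simp add: assoc_mult_mat[of _ n n _ n _ n])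
    also have "- \<dots> = U1 * ?P * Ui"
      unfolding U1_def using CTc Tc Pc Ui(1) by (simp add: uminus_mult_left_mat)
    finally show ?thesis .
  qed
  have br: "bruhat n (coxeter n c) U1 ?P Ui"
    unfolding bruhat_def using U1c Ui(1) uU1 uUi N.perm_hh cox by simp
  have dY: "det N.Ym \<noteq> 0" using det_mult[OF Cc Yc] N.CY dU by simp
  have dP: "det ?P \<noteq> 0" using det_mult[OF Tc Pc] N.TP dY by simp
  have dU1: "det U1 \<noteq> 0" using upper_det_diag[OF U1c uU1] dgU1 by simp
  have dUi: "det Ui \<noteq> 0" using det_mult[OF Uc Ui(1)] Ui(2) by (auto simp: det_one)
  have dM: "det (U1 * ?P * Ui) \<noteq> 0"
    using det_mult[of "U1 * ?P" n Ui] det_mult[OF U1c Pc] U1c Pc Ui(1) dU1 dP dUi by simp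
  show ?thesis
    unfolding is_coxeter_perm_def
  proof (intro conjI allI impI)
    show "\<exists>U1 P U2. bruhat n (coxeter n c) U1 P U2" using br by blast
    fix V1 Q V2 i j
    assume b: "bruhat n (coxeter n c) V1 Q V2" and i: "i < n" and j: "j < n"
    from b have V: "V1 \<in> carrier_mat n n" "V2 \<in> carrier_mat n n" "upper_triangular V1"
      "upper_triangular V2" "is_perm_mat n Q" "coxeter n c = V1 * Q * V2"
      unfolding bruhat_def by auto
    have "\<forall>i<n. \<forall>j<n. Q $$ (j, i) \<noteq> 0 \<longleftrightarrow> j = N.hh i"
      by (rule bruhat_unique[OF U1c Ui(1) V(1) V(2) uU1 uUi V(3) V(4) N.hh_bij V(5)])
        (use cox V(6) dM in simp_all)
    then show "Q $$ (j, i) \<noteq> 0 \<longleftrightarrow> j = ringel_hperm c i"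
      using i j N.ringel_eq[OF i] unfolding N.hh_def by simp
  qed
qed

end
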